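(* There exists a setting (with pairwise distinct budgets) such that, in the game under the BCP mechanism in which every player's budget-bid is fixed to his true budget ($g_i=B_i$) and each player's strategy is only his value-bid $b_i\ge0$, there is no pure Nash equilibrium (i.e. for every profile of value-bids some player can strictly increase his utility by changing only his own value-bid).
   Context: Setting: there are $k\ge 1$ slots with public click-through rates $\theta_1>\theta_2>\dots>\theta_k>0$, and $n\ge k$ players. Player $i$ has a private value per click $v_i\ge 0$ and a budget $B_i>0$; the budgets $B_1,\dots,B_n$ are pairwise distinct. A setting consists of $k,n,(\theta_j),(v_i),(B_i)$ together with a fixed strict priority order on the players used to break all ties. Each player $i$ submits a value-bid $b_i\ge 0$ and a budget-bid $g_i\ge 0$; a mechanism outputs an injective partial slot assignment (assigned player $i$ gets slot $s(i)\in\{1,\dots,k\}$) and a price per click $p(i)\ge0$ for each assigned player; unassigned players pay nothing. The utility of player $i$ is $u_i=0$ if $i$ is unassigned, $u_i=\theta_{s(i)}(v_i-p(i))$ if $i$ is assigned and $\theta_{s(i)}p(i)\le B_i$, and $u_i=-\infty$ if $i$ is assigned and $\theta_{s(i)}p(i)>B_i$. BCP: order the players by decreasing value-bid (ties broken by the priority order); each player's tentative price per click is the value-bid of the player immediately after him in this order (0 for the last player). Then process the players in this order; each player $i$ is assigned the highest-CTR slot $s$ not yet assigned such that $\theta_s\cdot(\text{his price})\le g_i$, and pays that price per click; if no unassigned slot satisfies this, he is left unassigned and pays nothing. *)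

theory Defs
  imports Complex_Main "HOL-Library.Extended_Real"
begin

text \<open>Players are 0..<n, slots are 1..k (slot 1 has the highest CTR).
  The priority order is a list pr enumerating all players, earlier = higher priority.\<close>

definition bcp_order :: "nat list \<Rightarrow> (nat \<Rightarrow> real) \<Rightarrow> nat list" where
  "bcp_order pr b = sort_key (\<lambda>i. - b i) pr"
  \<comment> \<open>decreasing value-bid; sort_key is stable, so ties are broken by pr\<close>

definition bcp_prices :: "nat list \<Rightarrow> (nat \<Rightarrow> real) \<Rightarrow> (nat \<times> real) list" where
  "bcp_prices pr b = (let os = bcp_order pr b in zip os (map b (tl os) @ [0]))"

fun bcp_proc :: "(nat \<Rightarrow> real) \<Rightarrow> nat \<Rightarrow> (nat \<Rightarrow> real) \<Rightarrow> nat set \<Rightarrow> (nat \<times> real) list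
                  \<Rightarrow> nat \<Rightarrow> (nat \<times> real) option" where
  "bcp_proc \<theta> k g used [] = (\<lambda>_. None)"
| "bcp_proc \<theta> k g used ((i, p) # rest) =
     (let S = {s \<in> {1..k}. s \<notin> used \<and> \<theta> s * p \<le> g i} in
      if S = {} then bcp_proc \<theta> k g used rest
      else (bcp_proc \<theta> k g (insert (Min S) used) rest)(i := Some (Min S, p)))"

text \<open>BCP outcome: for each player, None (unassigned) or Some (slot, price per click).\<close>
definition BCP :: "(nat \<Rightarrow> real) \<Rightarrow> nat \<Rightarrow> nat list \<Rightarrow> (nat \<Rightarrow> real) \<Rightarrow> (nat \<Rightarrow> real)
                   \<Rightarrow> nat \<Rightarrow> (nat \<times> real) option" where
  "BCP \<theta> k pr b g = bcp_proc \<theta> k g {} (bcp_prices pr b)"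

definition utility :: "(nat \<Rightarrow> real) \<Rightarrow> real \<Rightarrow> real \<Rightarrow> (nat \<times> real) option \<Rightarrow> ereal" where
  "utility \<theta> vi Bi out = (case out of None \<Rightarrow> 0
      | Some (s, p) \<Rightarrow> if \<theta> s * p \<le> Bi then ereal (\<theta> s * (vi - p)) else -\<infinity>)"

definition valid_setting :: "nat \<Rightarrow> nat \<Rightarrow> (nat \<Rightarrow> real) \<Rightarrow> (nat \<Rightarrow> real) \<Rightarrow> (nat \<Rightarrow> real)
                             \<Rightarrow> nat list \<Rightarrow> bool" where
  "valid_setting k n \<theta> v B pr \<longleftrightarrow>
     1 \<le> k \<and> k \<le> n \<and>
     (\<forall>j\<in>{1..k}. \<forall>j'\<in>{1..k}. j < j' \<longrightarrow> \<theta> j > \<theta> j') \<and> \<theta> k > 0 \<and>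
     (\<forall>i<n. v i \<ge> 0) \<and> (\<forall>i<n. B i > 0) \<and> inj_on B {0..<n} \<and>
     distinct pr \<and> set pr = {0..<n}"

definition game_util :: "nat \<Rightarrow> (nat \<Rightarrow> real) \<Rightarrow> (nat \<Rightarrow> real) \<Rightarrow> (nat \<Rightarrow> real) \<Rightarrow> nat list
                         \<Rightarrow> (nat \<Rightarrow> real) \<Rightarrow> nat \<Rightarrow> ereal" where
  "game_util k \<theta> v B pr b i = utility \<theta> (v i) (B i) (BCP \<theta> k pr b B i)"

end

theory Submission imports Defs begin
definition th :: "nat \<Rightarrow> real" where "th s = (if s = 1 then 2 else 1)"
definition vv :: "nat \<Rightarrow> real" where "vv i = (if i = 0 then 7 else if i = 1 then 8 else 5)"
definition BB :: "nat \<Rightarrow> real" where "BB i = (if i = 0 then 3 else if i = 1 then 6 else 9)"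

lemma S2: "{s \<in> {1..2::nat}. Q s} = (if Q 1 then {1} else {}) \<union> (if Q 2 then {2} else {})"
proof -
  have "{1..2::nat} = {1,2}" by auto
  then show ?thesis by auto
qed

lemma step: "bcp_proc th 2 g used ((i,p)#rest) =
   (if 1 \<notin> used \<and> 2*p \<le> g i then (bcp_proc th 2 g (insert 1 used) rest)(i := Some(1,p))
    else if 2 \<notin> used \<and> p \<le> g i then (bcp_proc th 2 g (insert 2 used) rest)(i := Some(2,p))
    else bcp_proc th 2 g used rest)"
proof -
  have U: "{1..2::nat} = {1,2}" by auto
  have S: "{s \<in> {1..2}. s \<notin> used \<and> th s * p \<le> g i} =
     (if 1 \<notin> used \<and> 2*p \<le> g i then {1} else {}) \<union> (if 2 \<notin> used \<and> p \<le> g i then {2} else {})"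
    unfolding U by (auto simp: th_def)
  show ?thesis unfolding bcp_proc.simps Let_def S by auto
qed

lemma ord: "bcp_order [0,1,2] b =
  (if b 2 \<le> b 1 then (if b 1 \<le> b 0 then [0,1,2] else if b 2 \<le> b 0 then [1,0,2] else [1,2,0])
   else (if b 2 \<le> b 0 then [0,2,1] else if b 1 \<le> b 0 then [2,0,1] else [2,1,0]))"
  by (simp add: bcp_order_def)

lemma GU: "game_util 2 th vv BB [0,1,2] b i =
   utility th (vv i) (BB i) (bcp_proc th 2 BB {} (let os = bcp_order [0,1,2] b in zip os (map b (tl os) @ [0])) i)"
  by (simp add: game_util_def BCP_def bcp_prices_def)

lemma ex_dev: assumes "game_util 2 th vv BB [0,1,2] (b(i := x)) i > game_util 2 th vv BB [0,1,2] b i" "i < 3" "x \<ge> 0"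
  shows "\<exists>i<3. \<exists>x\<ge>0. game_util 2 th vv BB [0,1,2] (b(i := x)) i > game_util 2 th vv BB [0,1,2] b i"
  using assms by blast

lemma L012_0: assumes "b 2 \<le> b 1" "b 1 \<le> b 0" "b 2 \<le> 3" "b 1 \<le> 3" "b 0 \<le> 3" "b 0 \<ge> 0" "b 1 \<ge> 0" "b 2 \<ge> 0"
  shows "\<exists>i<3. \<exists>x\<ge>0. game_util 2 th vv BB [0,1,2] (b(i := x)) i > game_util 2 th vv BB [0,1,2] b i"
proof (rule ex_dev[where i=2 and x="6"])
  show "game_util 2 th vv BB [0,1,2] (b(2 := 6)) 2 > game_util 2 th vv BB [0,1,2] b 2"
    unfolding GU ord Let_def using assms by (simp add: step utility_def th_def vv_def BB_def del: bcp_proc.simps(2))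
qed (use assms in auto)

lemma L012_1: assumes "b 2 \<le> b 1" "b 1 \<le> b 0" "b 2 \<le> 3" "b 1 \<le> 3" "\<not> b 0 \<le> 3" "b 0 \<ge> 0" "b 1 \<ge> 0" "b 2 \<ge> 0"
  shows "\<exists>i<3. \<exists>x\<ge>0. game_util 2 th vv BB [0,1,2] (b(i := x)) i > game_util 2 th vv BB [0,1,2] b i"
proof (rule ex_dev[where i=2 and x="(3 + b 0)/2"])
  show "game_util 2 th vv BB [0,1,2] (b(2 := (3 + b 0)/2)) 2 > game_util 2 th vv BB [0,1,2] b 2"
    unfolding GU ord Let_def using assms by (simp add: step utility_def th_def vv_def BB_def del: bcp_proc.simps(2))
qed (use assms in auto)

lemma L012_2: assumes "b 2 \<le> b 1" "b 1 \<le> b 0" "b 2 \<le> 3" "\<not> b 1 \<le> 3" "b 0 \<ge> 0" "b 1 \<ge> 0" "b 2 \<ge> 0"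
  shows "\<exists>i<3. \<exists>x\<ge>0. game_util 2 th vv BB [0,1,2] (b(i := x)) i > game_util 2 th vv BB [0,1,2] b i"
proof (rule ex_dev[where i=2 and x="(3 + b 1)/2"])
  show "game_util 2 th vv BB [0,1,2] (b(2 := (3 + b 1)/2)) 2 > game_util 2 th vv BB [0,1,2] b 2"
    unfolding GU ord Let_def using assms by (simp add: step utility_def th_def vv_def BB_def del: bcp_proc.simps(2))
qed (use assms in auto)

lemma L012_3: assumes "b 2 \<le> b 1" "b 1 \<le> b 0" "\<not> b 2 \<le> 3" "b 0 \<ge> 0" "b 1 \<ge> 0" "b 2 \<ge> 0"
  shows "\<exists>i<3. \<exists>x\<ge>0. game_util 2 th vv BB [0,1,2] (b(i := x)) i > game_util 2 th vv BB [0,1,2] b i"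
proof (rule ex_dev[where i=1 and x="(3 + b 2)/2"])
  show "game_util 2 th vv BB [0,1,2] (b(1 := (3 + b 2)/2)) 1 > game_util 2 th vv BB [0,1,2] b 1"
    unfolding GU ord Let_def using assms by (simp add: step utility_def th_def vv_def BB_def del: bcp_proc.simps(2))
qed (use assms in auto)

lemma L021_0: assumes "\<not> b 2 \<le> b 1" "b 2 \<le> b 0" "b 2 \<le> 3" "b 0 \<ge> 0" "b 1 \<ge> 0" "b 2 \<ge> 0"
  shows "\<exists>i<3. \<exists>x\<ge>0. game_util 2 th vv BB [0,1,2] (b(i := x)) i > game_util 2 th vv BB [0,1,2] b i"
proof (rule ex_dev[where i=1 and x="(3 + b 2)/2"])
  show "game_util 2 th vv BB [0,1,2] (b(1 := (3 + b 2)/2)) 1 > game_util 2 th vv BB [0,1,2] b 1"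
    unfolding GU ord Let_def using assms by (simp add: step utility_def th_def vv_def BB_def del: bcp_proc.simps(2))
qed (use assms in auto)

lemma L021_1: assumes "\<not> b 2 \<le> b 1" "b 2 \<le> b 0" "\<not> b 2 \<le> 3" "b 1 \<le> 3" "b 2 \<le> 6" "b 0 \<ge> 0" "b 1 \<ge> 0" "b 2 \<ge> 0"
  shows "\<exists>i<3. \<exists>x\<ge>0. game_util 2 th vv BB [0,1,2] (b(i := x)) i > game_util 2 th vv BB [0,1,2] b i"
proof (rule ex_dev[where i=0 and x="(3 + b 2)/2"])
  show "game_util 2 th vv BB [0,1,2] (b(0 := (3 + b 2)/2)) 0 > game_util 2 th vv BB [0,1,2] b 0"
    unfolding GU ord Let_def using assms by (simp add: step utility_def th_def vv_def BB_def del: bcp_proc.simps(2))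
qed (use assms in auto)

lemma L021_2: assumes "\<not> b 2 \<le> b 1" "b 2 \<le> b 0" "\<not> b 2 \<le> 3" "b 1 \<le> 3" "\<not> b 2 \<le> 6" "b 0 \<ge> 0" "b 1 \<ge> 0" "b 2 \<ge> 0"
  shows "\<exists>i<3. \<exists>x\<ge>0. game_util 2 th vv BB [0,1,2] (b(i := x)) i > game_util 2 th vv BB [0,1,2] b i"
proof (rule ex_dev[where i=1 and x="(3 + b 2)/2"])
  show "game_util 2 th vv BB [0,1,2] (b(1 := (3 + b 2)/2)) 1 > game_util 2 th vv BB [0,1,2] b 1"
    unfolding GU ord Let_def using assms by (simp add: step utility_def th_def vv_def BB_def del: bcp_proc.simps(2))
qed (use assms in auto)

lemma L021_3: assumes "\<not> b 2 \<le> b 1" "b 2 \<le> b 0" "\<not> b 2 \<le> 3" "\<not> b 1 \<le> 3" "b 0 \<ge> 0" "b 1 \<ge> 0" "b 2 \<ge> 0"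
  shows "\<exists>i<3. \<exists>x\<ge>0. game_util 2 th vv BB [0,1,2] (b(i := x)) i > game_util 2 th vv BB [0,1,2] b i"
proof (rule ex_dev[where i=2 and x="(3 + b 1)/2"])
  show "game_util 2 th vv BB [0,1,2] (b(2 := (3 + b 1)/2)) 2 > game_util 2 th vv BB [0,1,2] b 2"
    unfolding GU ord Let_def using assms by (simp add: step utility_def th_def vv_def BB_def del: bcp_proc.simps(2))
qed (use assms in auto)

lemma L102_0: assumes "b 2 \<le> b 1" "\<not> b 1 \<le> b 0" "b 2 \<le> b 0" "b 0 \<le> 3" "b 0 \<ge> 0" "b 1 \<ge> 0" "b 2 \<ge> 0"
  shows "\<exists>i<3. \<exists>x\<ge>0. game_util 2 th vv BB [0,1,2] (b(i := x)) i > game_util 2 th vv BB [0,1,2] b i"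
proof (rule ex_dev[where i=2 and x="(3 + b 1)/2"])
  show "game_util 2 th vv BB [0,1,2] (b(2 := (3 + b 1)/2)) 2 > game_util 2 th vv BB [0,1,2] b 2"
    unfolding GU ord Let_def using assms by (simp add: step utility_def th_def vv_def BB_def del: bcp_proc.simps(2))
qed (use assms in auto)

lemma L102_1: assumes "b 2 \<le> b 1" "\<not> b 1 \<le> b 0" "b 2 \<le> b 0" "\<not> b 0 \<le> 3" "b 0 \<ge> 0" "b 1 \<ge> 0" "b 2 \<ge> 0"
  shows "\<exists>i<3. \<exists>x\<ge>0. game_util 2 th vv BB [0,1,2] (b(i := x)) i > game_util 2 th vv BB [0,1,2] b i"
proof (rule ex_dev[where i=1 and x="(3 + b 2)/2"])
  show "game_util 2 th vv BB [0,1,2] (b(1 := (3 + b 2)/2)) 1 > game_util 2 th vv BB [0,1,2] b 1"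
    unfolding GU ord Let_def using assms by (simp add: step utility_def th_def vv_def BB_def del: bcp_proc.simps(2))
qed (use assms in auto)

lemma L120_0: assumes "b 2 \<le> b 1" "\<not> b 1 \<le> b 0" "\<not> b 2 \<le> b 0" "b 2 \<le> 3" "b 0 \<ge> 0" "b 1 \<ge> 0" "b 2 \<ge> 0"
  shows "\<exists>i<3. \<exists>x\<ge>0. game_util 2 th vv BB [0,1,2] (b(i := x)) i > game_util 2 th vv BB [0,1,2] b i"
proof (rule ex_dev[where i=0 and x="(3 + b 2)/2"])
  show "game_util 2 th vv BB [0,1,2] (b(0 := (3 + b 2)/2)) 0 > game_util 2 th vv BB [0,1,2] b 0"
    unfolding GU ord Let_def using assms by (simp add: step utility_def th_def vv_def BB_def del: bcp_proc.simps(2))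
qed (use assms in auto)

lemma L120_1: assumes "b 2 \<le> b 1" "\<not> b 1 \<le> b 0" "\<not> b 2 \<le> b 0" "\<not> b 2 \<le> 3" "b 0 \<le> 3" "b 0 \<ge> 0" "b 1 \<ge> 0" "b 2 \<ge> 0"
  shows "\<exists>i<3. \<exists>x\<ge>0. game_util 2 th vv BB [0,1,2] (b(i := x)) i > game_util 2 th vv BB [0,1,2] b i"
proof (rule ex_dev[where i=1 and x="(3 + b 2)/2"])
  show "game_util 2 th vv BB [0,1,2] (b(1 := (3 + b 2)/2)) 1 > game_util 2 th vv BB [0,1,2] b 1"
    unfolding GU ord Let_def using assms by (simp add: step utility_def th_def vv_def BB_def del: bcp_proc.simps(2))
qed (use assms in auto)

lemma L120_2: assumes "b 2 \<le> b 1" "\<not> b 1 \<le> b 0" "\<not> b 2 \<le> b 0" "\<not> b 2 \<le> 3" "\<not> b 0 \<le> 3" "b 0 \<ge> 0" "b 1 \<ge> 0" "b 2 \<ge> 0"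
  shows "\<exists>i<3. \<exists>x\<ge>0. game_util 2 th vv BB [0,1,2] (b(i := x)) i > game_util 2 th vv BB [0,1,2] b i"
proof (rule ex_dev[where i=2 and x="(3 + b 0)/2"])
  show "game_util 2 th vv BB [0,1,2] (b(2 := (3 + b 0)/2)) 2 > game_util 2 th vv BB [0,1,2] b 2"
    unfolding GU ord Let_def using assms by (simp add: step utility_def th_def vv_def BB_def del: bcp_proc.simps(2))
qed (use assms in auto)

lemma L201_0: assumes "\<not> b 2 \<le> b 1" "\<not> b 2 \<le> b 0" "b 1 \<le> b 0" "b 0 \<le> 3" "b 0 \<ge> 0" "b 1 \<ge> 0" "b 2 \<ge> 0"
  shows "\<exists>i<3. \<exists>x\<ge>0. game_util 2 th vv BB [0,1,2] (b(i := x)) i > game_util 2 th vv BB [0,1,2] b i"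
proof (rule ex_dev[where i=1 and x="(3 + b 2)/2"])
  show "game_util 2 th vv BB [0,1,2] (b(1 := (3 + b 2)/2)) 1 > game_util 2 th vv BB [0,1,2] b 1"
    unfolding GU ord Let_def using assms by (simp add: step utility_def th_def vv_def BB_def del: bcp_proc.simps(2))
qed (use assms in auto)

lemma L201_1: assumes "\<not> b 2 \<le> b 1" "\<not> b 2 \<le> b 0" "b 1 \<le> b 0" "\<not> b 0 \<le> 3" "b 1 \<le> 3" "b 0 \<ge> 0" "b 1 \<ge> 0" "b 2 \<ge> 0"
  shows "\<exists>i<3. \<exists>x\<ge>0. game_util 2 th vv BB [0,1,2] (b(i := x)) i > game_util 2 th vv BB [0,1,2] b i"
proof (rule ex_dev[where i=2 and x="(3 + b 0)/2"])
  show "game_util 2 th vv BB [0,1,2] (b(2 := (3 + b 0)/2)) 2 > game_util 2 th vv BB [0,1,2] b 2"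
    unfolding GU ord Let_def using assms by (simp add: step utility_def th_def vv_def BB_def del: bcp_proc.simps(2))
qed (use assms in auto)

lemma L201_2: assumes "\<not> b 2 \<le> b 1" "\<not> b 2 \<le> b 0" "b 1 \<le> b 0" "\<not> b 0 \<le> 3" "\<not> b 1 \<le> 3" "b 0 \<ge> 0" "b 1 \<ge> 0" "b 2 \<ge> 0"
  shows "\<exists>i<3. \<exists>x\<ge>0. game_util 2 th vv BB [0,1,2] (b(i := x)) i > game_util 2 th vv BB [0,1,2] b i"
proof (rule ex_dev[where i=2 and x="(3 + b 1)/2"])
  show "game_util 2 th vv BB [0,1,2] (b(2 := (3 + b 1)/2)) 2 > game_util 2 th vv BB [0,1,2] b 2"
    unfolding GU ord Let_def using assms by (simp add: step utility_def th_def vv_def BB_def del: bcp_proc.simps(2))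
qed (use assms in auto)

lemma L210_0: assumes "\<not> b 2 \<le> b 1" "\<not> b 2 \<le> b 0" "\<not> b 1 \<le> b 0" "b 1 \<le> 3" "b 2 \<le> 6" "b 0 \<ge> 0" "b 1 \<ge> 0" "b 2 \<ge> 0"
  shows "\<exists>i<3. \<exists>x\<ge>0. game_util 2 th vv BB [0,1,2] (b(i := x)) i > game_util 2 th vv BB [0,1,2] b i"
proof (rule ex_dev[where i=0 and x="(3 + b 2)/2"])
  show "game_util 2 th vv BB [0,1,2] (b(0 := (3 + b 2)/2)) 0 > game_util 2 th vv BB [0,1,2] b 0"
    unfolding GU ord Let_def using assms by (simp add: step utility_def th_def vv_def BB_def del: bcp_proc.simps(2))
qed (use assms in auto)

lemma L210_1: assumes "\<not> b 2 \<le> b 1" "\<not> b 2 \<le> b 0" "\<not> b 1 \<le> b 0" "b 1 \<le> 3" "\<not> b 2 \<le> 6" "b 0 \<ge> 0" "b 1 \<ge> 0" "b 2 \<ge> 0"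
  shows "\<exists>i<3. \<exists>x\<ge>0. game_util 2 th vv BB [0,1,2] (b(i := x)) i > game_util 2 th vv BB [0,1,2] b i"
proof (rule ex_dev[where i=1 and x="(3 + b 2)/2"])
  show "game_util 2 th vv BB [0,1,2] (b(1 := (3 + b 2)/2)) 1 > game_util 2 th vv BB [0,1,2] b 1"
    unfolding GU ord Let_def using assms by (simp add: step utility_def th_def vv_def BB_def del: bcp_proc.simps(2))
qed (use assms in auto)

lemma L210_2: assumes "\<not> b 2 \<le> b 1" "\<not> b 2 \<le> b 0" "\<not> b 1 \<le> b 0" "\<not> b 1 \<le> 3" "b 0 \<le> 3" "b 0 \<ge> 0" "b 1 \<ge> 0" "b 2 \<ge> 0"
  shows "\<exists>i<3. \<exists>x\<ge>0. game_util 2 th vv BB [0,1,2] (b(i := x)) i > game_util 2 th vv BB [0,1,2] b i"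
proof (rule ex_dev[where i=2 and x="(3 + b 1)/2"])
  show "game_util 2 th vv BB [0,1,2] (b(2 := (3 + b 1)/2)) 2 > game_util 2 th vv BB [0,1,2] b 2"
    unfolding GU ord Let_def using assms by (simp add: step utility_def th_def vv_def BB_def del: bcp_proc.simps(2))
qed (use assms in auto)

lemma L210_3: assumes "\<not> b 2 \<le> b 1" "\<not> b 2 \<le> b 0" "\<not> b 1 \<le> b 0" "\<not> b 1 \<le> 3" "\<not> b 0 \<le> 3" "b 0 \<ge> 0" "b 1 \<ge> 0" "b 2 \<ge> 0"
  shows "\<exists>i<3. \<exists>x\<ge>0. game_util 2 th vv BB [0,1,2] (b(i := x)) i > game_util 2 th vv BB [0,1,2] b i"
proof (rule ex_dev[where i=2 and x="(3 + b 0)/2"])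
  show "game_util 2 th vv BB [0,1,2] (b(2 := (3 + b 0)/2)) 2 > game_util 2 th vv BB [0,1,2] b 2"
    unfolding GU ord Let_def using assms by (simp add: step utility_def th_def vv_def BB_def del: bcp_proc.simps(2))
qed (use assms in auto)

lemma valid: "valid_setting 2 3 th vv BB [0,1,2]"
proof -
  have U: "{0..<3::nat} = {0,1,2}" by auto
  have U2: "{1..2::nat} = {1,2}" by auto
  have "inj_on BB {0..<3}" unfolding U by (auto simp: inj_on_def BB_def)
  moreover have "\<forall>j\<in>{1..2}. \<forall>j'\<in>{1..2}. j < j' \<longrightarrow> th j > th j'"
    unfolding U2 by (auto simp: th_def)
  ultimately show ?thesis unfolding valid_setting_def
    by (auto simp: th_def vv_def BB_def U)
qed

lemma main: "\<forall>b :: nat \<Rightarrow> real. (\<forall>i<3. b i \<ge> 0) \<longrightarrow>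
   (\<exists>i<3. \<exists>x\<ge>0. game_util 2 th vv BB [0,1,2] (b(i := x)) i > game_util 2 th vv BB [0,1,2] b i)"
proof (intro allI impI)
  fix b :: "nat \<Rightarrow> real"
  assume "\<forall>i<3. b i \<ge> 0"
  then have h: "b 0 \<ge> 0" "b 1 \<ge> 0" "b 2 \<ge> 0" by auto
  show "\<exists>i<3. \<exists>x\<ge>0. game_util 2 th vv BB [0,1,2] (b(i := x)) i > game_util 2 th vv BB [0,1,2] b i"
  proof -
    show ?thesis
    proof (cases "b 2 \<le> b 1")
      case True note c1 = True
      show ?thesis
      proof (cases "b 1 \<le> b 0")
        case True note c2 = True
        show ?thesis
        proof (cases "b 2 \<le> 3")
          case True note c3 = True
          show ?thesis
          proof (cases "b 1 \<le> 3")
            case True note c4 = True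
            show ?thesis
            proof (cases "b 0 \<le> 3")
              case True note c5 = True
              show ?thesis using L012_0[of b] h c1 c2 c3 c4 c5 by blast
            next
              case False note c5 = False
              show ?thesis using L012_1[of b] h c1 c2 c3 c4 c5 by blast
            qed
          next
            case False note c4 = False
            show ?thesis using L012_2[of b] h c1 c2 c3 c4 by blast
          qed
        next
          case False note c3 = False
          show ?thesis using L012_3[of b] h c1 c2 c3 by blast
        qed
      next
        case False note c2 = False
        show ?thesis
        proof (cases "b 2 \<le> b 0")
          case True note c6 = True
          show ?thesis
          proof (cases "b 0 \<le> 3")
            case True note c7 = True
            show ?thesis using L102_0[of b] h c1 c2 c6 c7 by blast
          next
            case False note c7 = False
            show ?thesis using L102_1[of b] h c1 c2 c6 c7 by blast
          qed
        next
          case False note c6 = False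
          show ?thesis
          proof (cases "b 2 \<le> 3")
            case True note c8 = True
            show ?thesis using L120_0[of b] h c1 c2 c6 c8 by blast
          next
            case False note c8 = False
            show ?thesis
            proof (cases "b 0 \<le> 3")
              case True note c9 = True
              show ?thesis using L120_1[of b] h c1 c2 c6 c8 c9 by blast
            next
              case False note c9 = False
              show ?thesis using L120_2[of b] h c1 c2 c6 c8 c9 by blast
            qed
          qed
        qed
      qed
    next
      case False note c1 = False
      show ?thesis
      proof (cases "b 2 \<le> b 0")
        case True note c10 = True
        show ?thesis
        proof (cases "b 2 \<le> 3")
          case True note c11 = True
          show ?thesis using L021_0[of b] h c1 c10 c11 by blast
        next
          case False note c11 = False
          show ?thesis
          proof (cases "b 1 \<le> 3")
            case True note c12 = True
            show ?thesis
            proof (cases "b 2 \<le> 6")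
              case True note c13 = True
              show ?thesis using L021_1[of b] h c1 c10 c11 c12 c13 by blast
            next
              case False note c13 = False
              show ?thesis using L021_2[of b] h c1 c10 c11 c12 c13 by blast
            qed
          next
            case False note c12 = False
            show ?thesis using L021_3[of b] h c1 c10 c11 c12 by blast
          qed
        qed
      next
        case False note c10 = False
        show ?thesis
        proof (cases "b 1 \<le> b 0")
          case True note c14 = True
          show ?thesis
          proof (cases "b 0 \<le> 3")
            case True note c15 = True
            show ?thesis using L201_0[of b] h c1 c10 c14 c15 by blast
          next
            case False note c15 = False
            show ?thesis
            proof (cases "b 1 \<le> 3")
              case True note c16 = True
              show ?thesis using L201_1[of b] h c1 c10 c14 c15 c16 by blast
            next
              case False note c16 = False
              show ?thesis using L201_2[of b] h c1 c10 c14 c15 c16 by blast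
            qed
          qed
        next
          case False note c14 = False
          show ?thesis
          proof (cases "b 1 \<le> 3")
            case True note c17 = True
            show ?thesis
            proof (cases "b 2 \<le> 6")
              case True note c18 = True
              show ?thesis using L210_0[of b] h c1 c10 c14 c17 c18 by blast
            next
              case False note c18 = False
              show ?thesis using L210_1[of b] h c1 c10 c14 c17 c18 by blast
            qed
          next
            case False note c17 = False
            show ?thesis
            proof (cases "b 0 \<le> 3")
              case True note c19 = True
              show ?thesis using L210_2[of b] h c1 c10 c14 c17 c19 by blast
            next
              case False note c19 = False
              show ?thesis using L210_3[of b] h c1 c10 c14 c17 c19 by blast
            qed
          qed
        qed
      qed
    qed
  qed
qed

theorem lemma1:
  shows "\<exists>k n \<theta> v B pr. valid_setting k n \<theta> v B pr \<and>
     (\<forall>b :: nat \<Rightarrow> real. (\<forall>i<n. b i \<ge> 0) \<longrightarrow>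
        (\<exists>i<n. \<exists>x\<ge>0. game_util k \<theta> v B pr (b(i := x)) i > game_util k \<theta> v B pr b i))"
  apply (rule exI[of _ 2], rule exI[of _ 3], rule exI[of _ th], rule exI[of _ vv], rule exI[of _ BB], rule exI[of _ "[0,1,2]"])
  using valid main by blast

end
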